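(* Let $R$ be a finite commutative Frobenius ring of characteristic $2$, let $G=\{g_1,\dots,g_n\}$ be a finite group of order $n$ with a fixed listing of its elements, let $v_1\neq v_2$ be elements of the group ring $RG$, and let $A$ be an $n\times n$ reverse circulant matrix over $R$. Let $C_\sigma$ be the code over $R$ generated by the $2n\times 4n$ matrix $$M(\sigma)=\left(\, I_{2n} \;\middle|\; \begin{matrix} \sigma(v_1) & \sigma(v_2)+A\\ \sigma(v_2)+A & \sigma(v_1)\end{matrix}\,\right).$$ Then $C_\sigma$ is a self-dual code of length $4n$ if and only if $$(\sigma(v_1+v_2)+A)(\sigma((v_1+v_2)^* )+A)=I_n \quad\text{and}\quad \sigma(v_1)(\sigma((v_1+v_2)^* )+A)=(\sigma(v_1+v_2)+A)\sigma(v_1^* ).$$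
   Context: For $v=\sum_{g\in G}\alpha_g g\in RG$, $\sigma(v)$ is the $n\times n$ matrix over $R$ whose $(i,j)$ entry is $\alpha_{g_i^{-1}g_j}$. The canonical involution is $v^*=\sum_{g}\alpha_g g^{-1}$. An $n\times n$ matrix $(a_{ij})$ is reverse circulant if $a_{ij}$ depends only on $(i+j)\bmod n$. A code is the $R$-submodule of $R^{4n}$ spanned by the rows of the generator matrix; it is self-dual if it equals its dual with respect to the Euclidean inner product $\langle x,y\rangle=\sum_i x_iy_i$. *)

theory Defs
  imports Complex_Main "HOL-Algebra.Group" "Jordan_Normal_Form.Matrix"
begin

text \<open>A finite ring R is Frobenius iff it admits a generating character: an additive
character chi of (R,+) whose kernel contains no nonzero (left) ideal.\<close>
definition additive_character :: "('a::comm_ring_1 \<Rightarrow> complex) \<Rightarrow> bool" where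
  "additive_character chi \<longleftrightarrow> (\<forall>a b. chi (a + b) = chi a * chi b) \<and> (\<forall>a. chi a \<noteq> 0)"

definition frobenius_ring :: "'a::{comm_ring_1,finite} itself \<Rightarrow> bool" where
  "frobenius_ring _ \<longleftrightarrow> (\<exists>chi :: 'a \<Rightarrow> complex. additive_character chi \<and>
       (\<forall>a::'a. a \<noteq> 0 \<longrightarrow> (\<exists>r. chi (r * a) \<noteq> 1)))"

text \<open>Group ring elements: coefficient functions on the carrier of G (extensional).\<close>
definition group_ring :: "('g, 'b) monoid_scheme \<Rightarrow> ('g \<Rightarrow> 'a::zero) set" where
  "group_ring G = {v. \<forall>h. h \<notin> carrier G \<longrightarrow> v h = 0}"

definition gr_add :: "('g, 'b) monoid_scheme \<Rightarrow> ('g \<Rightarrow> 'a::comm_ring_1) \<Rightarrow> ('g \<Rightarrow> 'a) \<Rightarrow> 'g \<Rightarrow> 'a" where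
  "gr_add G v w = (\<lambda>h. if h \<in> carrier G then v h + w h else 0)"

text \<open>Canonical involution: v* = sum alpha_g g^{-1}, i.e. coefficient of h is alpha_{h^{-1}}.\<close>
definition gr_star :: "('g, 'b) monoid_scheme \<Rightarrow> ('g \<Rightarrow> 'a::comm_ring_1) \<Rightarrow> 'g \<Rightarrow> 'a" where
  "gr_star G v = (\<lambda>h. if h \<in> carrier G then v (inv\<^bsub>G\<^esub> h) else 0)"

text \<open>sigma(v): (i,j) entry is alpha_{g_i^{-1} g_j} (indices 0-based).\<close>
definition sigma_mat :: "('g, 'b) monoid_scheme \<Rightarrow> nat \<Rightarrow> (nat \<Rightarrow> 'g) \<Rightarrow> ('g \<Rightarrow> 'a::comm_ring_1) \<Rightarrow> 'a mat" where
  "sigma_mat G n g v = mat n n (\<lambda>(i,j). v (inv\<^bsub>G\<^esub> (g i) \<otimes>\<^bsub>G\<^esub> g j))"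

definition reverse_circulant :: "nat \<Rightarrow> 'a mat \<Rightarrow> bool" where
  "reverse_circulant n A \<longleftrightarrow> A \<in> carrier_mat n n \<and>
     (\<forall>i j k l. i < n \<longrightarrow> j < n \<longrightarrow> k < n \<longrightarrow> l < n \<longrightarrow>
        (i + j) mod n = (k + l) mod n \<longrightarrow> A $$ (i,j) = A $$ (k,l))"

definition row_code :: "'a::comm_ring_1 mat \<Rightarrow> 'a vec set" where
  "row_code M = {transpose_mat M *\<^sub>v c | c. c \<in> carrier_vec (dim_row M)}"

definition dual_code :: "nat \<Rightarrow> 'a::comm_ring_1 vec set \<Rightarrow> 'a vec set" where
  "dual_code N C = {y \<in> carrier_vec N. \<forall>x\<in>C. x \<bullet> y = 0}"

definition self_dual :: "nat \<Rightarrow> 'a::comm_ring_1 vec set \<Rightarrow> bool" where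
  "self_dual N C \<longleftrightarrow> C \<subseteq> carrier_vec N \<and> C = dual_code N C"

definition gen_matrix :: "('g, 'b) monoid_scheme \<Rightarrow> nat \<Rightarrow> (nat \<Rightarrow> 'g) \<Rightarrow>
    ('g \<Rightarrow> 'a::comm_ring_1) \<Rightarrow> ('g \<Rightarrow> 'a) \<Rightarrow> 'a mat \<Rightarrow> 'a mat" where
  "gen_matrix G n g v1 v2 A =
     (let S1 = sigma_mat G n g v1; S2 = sigma_mat G n g v2 + A in
      four_block_mat (1\<^sub>m (2*n)) (four_block_mat S1 S2 S2 S1) (0\<^sub>m 0 (2*n)) (0\<^sub>m 0 (2*n)))"

end

theory Submission
  imports Defs "Jordan_Normal_Form.Determinant"
begin


lemma scalar_prod_append:
  assumes "a \<in> carrier_vec n" "c \<in> carrier_vec n" "b \<in> carrier_vec k" "d \<in> carrier_vec k"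
  shows "(a @\<^sub>v b) \<bullet> (c @\<^sub>v d) = a \<bullet> c + b \<bullet> (d :: 'a :: comm_ring_1 vec)"
proof -
  have "(a @\<^sub>v b) \<bullet> (c @\<^sub>v d) = (\<Sum>i\<in>{0..<n+k}. (a @\<^sub>v b) $ i * (c @\<^sub>v d) $ i)"
    using assms by (simp add: scalar_prod_def)
  also have "\<dots> = (\<Sum>i\<in>{0..<n}. (a @\<^sub>v b) $ i * (c @\<^sub>v d) $ i) + (\<Sum>i\<in>{n..<n+k}. (a @\<^sub>v b) $ i * (c @\<^sub>v d) $ i)"
    by (simp add: sum.atLeastLessThan_concat)
  also have "(\<Sum>i\<in>{n..<n+k}. (a @\<^sub>v b) $ i * (c @\<^sub>v d) $ i) = (\<Sum>i\<in>{0..<k}. (a @\<^sub>v b) $ (i+n) * (c @\<^sub>v d) $ (i+n))"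
    using sum.shift_bounds_nat_ivl[of "\<lambda>i. (a @\<^sub>v b) $ i * (c @\<^sub>v d) $ i" 0 n k] by (simp add: add.commute)
  also have "\<dots> = b \<bullet> d" using assms by (simp add: scalar_prod_def)
  also have "(\<Sum>i\<in>{0..<n}. (a @\<^sub>v b) $ i * (c @\<^sub>v d) $ i) = a \<bullet> c" using assms by (simp add: scalar_prod_def)
  finally show ?thesis .
qed

lemma left_right_inv_comm:
  fixes A B :: "'a :: comm_ring_1 mat"
  assumes A: "A \<in> carrier_mat n n" and B: "B \<in> carrier_mat n n" and AB: "A * B = 1\<^sub>m n"
  shows "B * A = 1\<^sub>m n"
proof -
  have de: "det A * det B = 1" using det_mult[OF A B] AB by simp
  note adj = adj_mat[OF A]
  have "adj_mat A = adj_mat A * (A * B)" using AB adj(1) by simp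
  also have "\<dots> = (adj_mat A * A) * B" using A B adj(1) by (simp add: assoc_mult_mat)
  also have "\<dots> = det A \<cdot>\<^sub>m B" using adj(3) B mult_smult_assoc_mat[OF one_carrier_mat B, of "det A"] by simp
  finally have adjA: "adj_mat A = det A \<cdot>\<^sub>m B" .
  have "det A \<cdot>\<^sub>m (B * A) = det A \<cdot>\<^sub>m 1\<^sub>m n"
    using adj(3) adjA A B by (metis mult_smult_assoc_mat)
  hence "det B \<cdot>\<^sub>m (det A \<cdot>\<^sub>m (B * A)) = det B \<cdot>\<^sub>m (det A \<cdot>\<^sub>m 1\<^sub>m n)" by simp
  moreover have "\<And>X. det B \<cdot>\<^sub>m (det A \<cdot>\<^sub>m X) = (X :: 'a mat)"
    by (rule eq_matI) (auto simp: de mult.assoc[symmetric] mult.commute[of "det B"])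
  ultimately show ?thesis by simp
qed

lemma mult_unit_index:
  assumes "A \<in> carrier_mat n m" "i < n" "j < m"
  shows "(A *\<^sub>v unit_vec m j) $ i = (A $$ (i, j) :: 'a :: comm_ring_1)"
  using assms by simp

lemma row_code_form:
  fixes B :: "'a :: comm_ring_1 mat"
  assumes B: "B \<in> carrier_mat m m"
  shows "row_code (four_block_mat (1\<^sub>m m) B (0\<^sub>m 0 m) (0\<^sub>m 0 m)) = {c @\<^sub>v (transpose_mat B *\<^sub>v c) | c. c \<in> carrier_vec m}"
proof -
  let ?M = "four_block_mat (1\<^sub>m m) B (0\<^sub>m 0 m) (0\<^sub>m 0 m)"
  have dr: "dim_row ?M = m" using B by simp
  have tr: "transpose_mat ?M = four_block_mat (1\<^sub>m m) (0\<^sub>m m 0) (transpose_mat B) (0\<^sub>m m 0)"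
    using transpose_four_block_mat[OF one_carrier_mat B zero_carrier_mat zero_carrier_mat] by simp
  have *: "transpose_mat ?M *\<^sub>v c = c @\<^sub>v (transpose_mat B *\<^sub>v c)" if c: "c \<in> carrier_vec m" for c
  proof -
    have c0: "c = c @\<^sub>v 0\<^sub>v 0" using c by (intro eq_vecI) auto
    have "transpose_mat ?M *\<^sub>v c = transpose_mat ?M *\<^sub>v (c @\<^sub>v 0\<^sub>v 0)" using c0 by simp
    also have "\<dots> = (1\<^sub>m m *\<^sub>v c + 0\<^sub>m m 0 *\<^sub>v 0\<^sub>v 0) @\<^sub>v (transpose_mat B *\<^sub>v c + 0\<^sub>m m 0 *\<^sub>v 0\<^sub>v 0)"
      unfolding tr using B c by (intro four_block_mat_mult_vec) auto
    also have "\<dots> = c @\<^sub>v (transpose_mat B *\<^sub>v c)"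
    proof -
      have "0\<^sub>m m 0 *\<^sub>v 0\<^sub>v 0 = (0\<^sub>v m :: 'a vec)" by (intro eq_vecI) auto
      thus ?thesis using B c by simp
    qed
    finally show ?thesis .
  qed
  show ?thesis unfolding row_code_def dr by (rule Collect_cong) (metis *)
qed

lemma self_dual_iff:
  fixes B :: "'a :: comm_ring_1 mat"
  assumes B: "B \<in> carrier_mat m m"
  shows "self_dual (m+m) (row_code (four_block_mat (1\<^sub>m m) B (0\<^sub>m 0 m) (0\<^sub>m 0 m)))
     \<longleftrightarrow> B * transpose_mat B = - 1\<^sub>m m"
proof -
  define C where "C = {c @\<^sub>v (transpose_mat B *\<^sub>v c) | c. c \<in> carrier_vec m}"
  have RC: "row_code (four_block_mat (1\<^sub>m m) B (0\<^sub>m 0 m) (0\<^sub>m 0 m)) = C"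
    unfolding C_def by (rule row_code_form[OF B])
  have BT: "transpose_mat B \<in> carrier_mat m m" using B by simp
  have dot: "(c @\<^sub>v (transpose_mat B *\<^sub>v c)) \<bullet> (c' @\<^sub>v (transpose_mat B *\<^sub>v c'))
      = c \<bullet> c' + c \<bullet> ((B * transpose_mat B) *\<^sub>v c')"
    if c: "c \<in> carrier_vec m" and c': "c' \<in> carrier_vec m" for c c'
  proof -
    have "(c @\<^sub>v (transpose_mat B *\<^sub>v c)) \<bullet> (c' @\<^sub>v (transpose_mat B *\<^sub>v c'))
       = c \<bullet> c' + (transpose_mat B *\<^sub>v c) \<bullet> (transpose_mat B *\<^sub>v c')"
      using c c' B by (intro scalar_prod_append[of _ m _ _ m]) auto
    also have "(transpose_mat B *\<^sub>v c) \<bullet> (transpose_mat B *\<^sub>v c') = c \<bullet> (B *\<^sub>v (transpose_mat B *\<^sub>v c'))"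
      using c c' B by (intro transpose_vec_mult_scalar) auto
    also have "B *\<^sub>v (transpose_mat B *\<^sub>v c') = (B * transpose_mat B) *\<^sub>v c'"
      using c' B BT by (simp add: assoc_mult_mat_vec)
    finally show ?thesis .
  qed
  show ?thesis unfolding RC
  proof
    assume sd: "self_dual (m+m) C"
    show "B * transpose_mat B = - 1\<^sub>m m"
    proof (rule eq_matI)
      fix i j assume i: "i < dim_row (- 1\<^sub>m m :: 'a mat)" and j: "j < dim_col (- 1\<^sub>m m :: 'a mat)"
      hence im: "i < m" and jm: "j < m" by auto
      let ?x = "unit_vec m i @\<^sub>v (transpose_mat B *\<^sub>v unit_vec m i)"
      let ?y = "unit_vec m j @\<^sub>v (transpose_mat B *\<^sub>v unit_vec m j)"
      have "?x \<in> C" "?y \<in> C" unfolding C_def by auto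
      hence "?x \<bullet> ?y = 0" using sd unfolding self_dual_def dual_code_def by blast
      hence "unit_vec m i \<bullet> unit_vec m j + unit_vec m i \<bullet> ((B * transpose_mat B) *\<^sub>v unit_vec m j) = 0"
        using dot[of "unit_vec m i" "unit_vec m j"] by simp
      moreover have "unit_vec m i \<bullet> ((B * transpose_mat B) *\<^sub>v unit_vec m j) = (B * transpose_mat B) $$ (i, j)"
      proof -
        have w: "(B * transpose_mat B) *\<^sub>v unit_vec m j \<in> carrier_vec m" using B by simp
        have "((B * transpose_mat B) *\<^sub>v unit_vec m j) $ i = (B * transpose_mat B) $$ (i, j)"
          by (rule mult_unit_index) (use B im jm in auto)
        thus ?thesis using scalar_prod_left_unit[OF w im] by simp
      qed
      ultimately have "(if i = j then 1 else 0) + (B * transpose_mat B) $$ (i, j) = 0"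
        using im jm by (simp del: index_mult_mat split: if_splits)
      thus "(B * transpose_mat B) $$ (i, j) = (- 1\<^sub>m m) $$ (i, j)"
        using im jm by (auto simp: eq_neg_iff_add_eq_0 add.commute)
    qed (use B in auto)
  next
    assume BB: "B * transpose_mat B = - 1\<^sub>m m"
    have "B * (- transpose_mat B) = - (B * transpose_mat B)" using B by (intro uminus_mult_right_mat) simp
    hence inv1: "B * (- transpose_mat B) = 1\<^sub>m m" by (simp only: BB uminus_uminus_mat)
    have "- transpose_mat B \<in> carrier_mat m m" using BT by simp
    note inv2 = left_right_inv_comm[OF B this inv1]
    moreover have "(- transpose_mat B) * B = - (transpose_mat B * B)" using B by (intro uminus_mult_left_mat) simp
    ultimately have "- (transpose_mat B * B) = 1\<^sub>m m" using inv2 by simp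
    hence TB: "transpose_mat B * B = - 1\<^sub>m m" by (metis uminus_uminus_mat)
    have sub: "C \<subseteq> carrier_vec (m+m)" unfolding C_def using B by auto
    have "C \<subseteq> dual_code (m+m) C"
    proof
      fix x assume "x \<in> C"
      then obtain c where c: "c \<in> carrier_vec m" and x: "x = c @\<^sub>v (transpose_mat B *\<^sub>v c)" unfolding C_def by auto
      have "y \<bullet> x = 0" if "y \<in> C" for y
      proof -
        obtain c' where c': "c' \<in> carrier_vec m" and y: "y = c' @\<^sub>v (transpose_mat B *\<^sub>v c')" using \<open>y \<in> C\<close> unfolding C_def by auto
        show ?thesis unfolding x y dot[OF c' c] BB using c c' by simp
      qed
      thus "x \<in> dual_code (m+m) C" using sub \<open>x \<in> C\<close> unfolding dual_code_def by auto
    qed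
    moreover have "dual_code (m+m) C \<subseteq> C"
    proof
      fix y assume y: "y \<in> dual_code (m+m) C"
      hence yc: "y \<in> carrier_vec (m+m)" and orth: "\<And>x. x \<in> C \<Longrightarrow> x \<bullet> y = 0" unfolding dual_code_def by auto
      define y1 where "y1 = vec_first y m"
      define y2 where "y2 = vec_last y m"
      have yy: "y = y1 @\<^sub>v y2" unfolding y1_def y2_def using yc by simp
      have y1c: "y1 \<in> carrier_vec m" and y2c: "y2 \<in> carrier_vec m" unfolding y1_def y2_def by auto
      have y1e: "y1 = - (B *\<^sub>v y2)"
      proof (rule eq_vecI)
        fix i assume "i < dim_vec (- (B *\<^sub>v y2))"
        hence i: "i < m" using B by simp
        have "unit_vec m i @\<^sub>v (transpose_mat B *\<^sub>v unit_vec m i) \<in> C" unfolding C_def by auto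
        hence "(unit_vec m i @\<^sub>v (transpose_mat B *\<^sub>v unit_vec m i)) \<bullet> (y1 @\<^sub>v y2) = 0" using orth yy by simp
        hence "unit_vec m i \<bullet> y1 + (transpose_mat B *\<^sub>v unit_vec m i) \<bullet> y2 = 0"
          using y1c y2c B by (subst (asm) scalar_prod_append[of _ m _ _ m]) auto
        moreover have "(transpose_mat B *\<^sub>v unit_vec m i) \<bullet> y2 = unit_vec m i \<bullet> (B *\<^sub>v y2)"
          using y2c B by (intro transpose_vec_mult_scalar) auto
        ultimately have "y1 $ i + (B *\<^sub>v y2) $ i = 0" using i y1c y2c B by simp
        thus "y1 $ i = (- (B *\<^sub>v y2)) $ i" using i B by (simp add: eq_neg_iff_add_eq_0)
      qed (use B y1c in auto)
      have "transpose_mat B *\<^sub>v y1 = - ((transpose_mat B * B) *\<^sub>v y2)"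
      proof -
        have "transpose_mat B *\<^sub>v (- (B *\<^sub>v y2)) = - (transpose_mat B *\<^sub>v (B *\<^sub>v y2))"
          using B y2c by (intro eq_vecI) (auto simp: scalar_prod_uminus_right)
        thus ?thesis unfolding y1e using B BT y2c by (simp add: assoc_mult_mat_vec)
      qed
      also have "\<dots> = y2" unfolding TB using y2c by simp
      finally have "y = y1 @\<^sub>v (transpose_mat B *\<^sub>v y1)" using yy by simp
      thus "y \<in> C" unfolding C_def using y1c by auto
    qed
    ultimately show "self_dual (m+m) C" unfolding self_dual_def using sub by auto
  qed
qed



lemma four_block_eq_iff:
  assumes "A1 \<in> carrier_mat n n" "B1 \<in> carrier_mat n n" "C1 \<in> carrier_mat n n" "D1 \<in> carrier_mat n n"
    "A2 \<in> carrier_mat n n" "B2 \<in> carrier_mat n n" "C2 \<in> carrier_mat n n" "D2 \<in> carrier_mat n n"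
  shows "four_block_mat A1 B1 C1 D1 = four_block_mat A2 B2 C2 D2 \<longleftrightarrow> A1 = A2 \<and> B1 = B2 \<and> C1 = C2 \<and> D1 = D2"
proof
  assume eq: "four_block_mat A1 B1 C1 D1 = four_block_mat A2 B2 C2 D2"
  have e: "four_block_mat A1 B1 C1 D1 $$ (i,j) = four_block_mat A2 B2 C2 D2 $$ (i,j)" for i j
    using eq by simp
  have "A1 = A2" proof (rule eq_matI)
    fix i j assume "i < dim_row A2" "j < dim_col A2" thus "A1 $$ (i,j) = A2 $$ (i,j)" using e[of i j] assms by simp
  qed (use assms in auto)
  moreover have "B1 = B2" proof (rule eq_matI)
    fix i j assume "i < dim_row B2" "j < dim_col B2" thus "B1 $$ (i,j) = B2 $$ (i,j)" using e[of i "n+j"] assms by simp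
  qed (use assms in auto)
  moreover have "C1 = C2" proof (rule eq_matI)
    fix i j assume "i < dim_row C2" "j < dim_col C2" thus "C1 $$ (i,j) = C2 $$ (i,j)" using e[of "n+i" j] assms by simp
  qed (use assms in auto)
  moreover have "D1 = D2" proof (rule eq_matI)
    fix i j assume "i < dim_row D2" "j < dim_col D2" thus "D1 $$ (i,j) = D2 $$ (i,j)" using e[of "n+i" "n+j"] assms by simp
  qed (use assms in auto)
  ultimately show "A1 = A2 \<and> B1 = B2 \<and> C1 = C2 \<and> D1 = D2" by simp
qed simp

lemma mat_eq_iff_entries:
  assumes "M \<in> carrier_mat n n" "N \<in> carrier_mat n n"
  shows "M = N \<longleftrightarrow> (\<forall>i<n. \<forall>j<n. M $$ (i,j) = N $$ (i,j))"
  using assms by (auto intro!: eq_matI)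

lemma char2_entries:
  fixes x y z w d :: "'a :: comm_ring_1"
  assumes two: "\<And>a::'a. a + a = 0"
  shows "(x + w = d \<and> y + z = 0 \<and> z + y = 0 \<and> w + x = d) \<longleftrightarrow> (x + y + z + w = d \<and> x + y = x + z)"
proof -
  have yz: "y + z = 0 \<longleftrightarrow> y = z"
    by (metis add_left_cancel two)
  show ?thesis
    by (metis (no_types, lifting) add.assoc add.commute add.right_neutral two yz add_left_cancel)
qed

theorem mainTheorem2:
  fixes G :: "('g, 'b) monoid_scheme" and n :: nat and g :: "nat \<Rightarrow> 'g"
    and v1 v2 :: "'g \<Rightarrow> 'a::{comm_ring_1, finite}" and A :: "'a mat"
  assumes "frobenius_ring TYPE('a)"
    and "CHAR('a) = 2"
    and "group G" and "finite (carrier G)" and "card (carrier G) = n"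
    and "bij_betw g {..<n} (carrier G)"
    and "v1 \<in> group_ring G" and "v2 \<in> group_ring G" and "v1 \<noteq> v2"
    and "reverse_circulant n A"
  shows "self_dual (4*n) (row_code (gen_matrix G n g v1 v2 A)) \<longleftrightarrow>
     ((sigma_mat G n g (gr_add G v1 v2) + A) * (sigma_mat G n g (gr_star G (gr_add G v1 v2)) + A) = 1\<^sub>m n
      \<and> sigma_mat G n g v1 * (sigma_mat G n g (gr_star G (gr_add G v1 v2)) + A)
        = (sigma_mat G n g (gr_add G v1 v2) + A) * sigma_mat G n g (gr_star G v1))"
proof -
  interpret grp: group G by fact
  have two: "\<And>a::'a. a + a = 0"
  proof -
    fix a :: 'a
    have "(of_nat 2 :: 'a) = 0" using of_nat_CHAR[where 'a='a] assms(2) by simp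
    hence "(2::'a) = 0" by simp
    thus "a + a = 0" by (metis mult_2 mult_zero_left)
  qed
  have neg: "\<And>a::'a. - a = a" using two by (metis add_eq_0_iff)
  have gc: "\<And>i. i < n \<Longrightarrow> g i \<in> carrier G" using assms(6) unfolding bij_betw_def by auto
  have Ac: "A \<in> carrier_mat n n" using assms(10) unfolding reverse_circulant_def by auto
  have AT: "transpose_mat A = A"
  proof (rule eq_matI)
    fix i j assume "i < dim_row A" "j < dim_col A"
    hence ij: "i < n" "j < n" using Ac by auto
    have rc: "\<forall>i j k l. i < n \<longrightarrow> j < n \<longrightarrow> k < n \<longrightarrow> l < n \<longrightarrow>
        (i + j) mod n = (k + l) mod n \<longrightarrow> A $$ (i,j) = A $$ (k,l)"
      using assms(10) unfolding reverse_circulant_def by blast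
    have "A $$ (j,i) = A $$ (i,j)" using rc ij by (metis add.commute)
    thus "transpose_mat A $$ (i,j) = A $$ (i,j)" using ij Ac by simp
  qed (use Ac in auto)
  have sc: "\<And>v. sigma_mat G n g v \<in> carrier_mat n n" unfolding sigma_mat_def by simp
  have sadd: "sigma_mat G n g (gr_add G v1 v2) = sigma_mat G n g v1 + sigma_mat G n g v2"
    by (rule eq_matI) (auto simp: sigma_mat_def gr_add_def gc)
  have sT: "\<And>v. transpose_mat (sigma_mat G n g v) = sigma_mat G n g (gr_star G v)"
    by (rule eq_matI) (auto simp: sigma_mat_def gr_star_def gc grp.inv_mult_group)
  define S1 where "S1 = sigma_mat G n g v1"
  define S2 where "S2 = sigma_mat G n g v2 + A"
  define B where "B = four_block_mat S1 S2 S2 S1"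
  have S1c: "S1 \<in> carrier_mat n n" unfolding S1_def by (rule sc)
  have S2c: "S2 \<in> carrier_mat n n" unfolding S2_def using sc Ac by simp
  have T1c: "transpose_mat S1 \<in> carrier_mat n n" using S1c by simp
  have T2c: "transpose_mat S2 \<in> carrier_mat n n" using S2c by simp
  have Bc: "B \<in> carrier_mat (2*n) (2*n)" unfolding B_def using S1c S2c by (simp add: mult_2)
  have gm: "gen_matrix G n g v1 v2 A = four_block_mat (1\<^sub>m (2*n)) B (0\<^sub>m 0 (2*n)) (0\<^sub>m 0 (2*n))"
    unfolding gen_matrix_def B_def S1_def S2_def Let_def by simp
  have n4: "4 * n = 2*n + 2*n" by simp
  have L1: "self_dual (4*n) (row_code (gen_matrix G n g v1 v2 A)) \<longleftrightarrow> B * transpose_mat B = - 1\<^sub>m (2*n)"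
    unfolding gm n4 by (rule self_dual_iff[OF Bc])
  have m1: "- 1\<^sub>m (2*n) = (1\<^sub>m (2*n) :: 'a mat)"
    by (rule eq_matI) (auto simp: neg)
  have BT: "transpose_mat B = four_block_mat (transpose_mat S1) (transpose_mat S2) (transpose_mat S2) (transpose_mat S1)"
    unfolding B_def using transpose_four_block_mat[OF S1c S2c S2c S1c] by simp
  define X where "X = S1 * transpose_mat S1"
  define Y where "Y = S1 * transpose_mat S2"
  define Z where "Z = S2 * transpose_mat S1"
  define W where "W = S2 * transpose_mat S2"
  have Xc: "X \<in> carrier_mat n n" and Yc: "Y \<in> carrier_mat n n" and Zc: "Z \<in> carrier_mat n n" and Wc: "W \<in> carrier_mat n n"
    unfolding X_def Y_def Z_def W_def using S1c S2c T1c T2c by auto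
  have BB: "B * transpose_mat B = four_block_mat (X + W) (Y + Z) (Z + Y) (W + X)"
    unfolding BT unfolding B_def X_def Y_def Z_def W_def
    by (rule mult_four_block_mat[OF S1c S2c S2c S1c T1c T2c T2c T1c])
  have one: "1\<^sub>m (2*n) = four_block_mat (1\<^sub>m n) (0\<^sub>m n n) (0\<^sub>m n n) (1\<^sub>m n :: 'a mat)"
    by (simp add: mult_2)
  have L1': "self_dual (4*n) (row_code (gen_matrix G n g v1 v2 A)) \<longleftrightarrow> B * transpose_mat B = 1\<^sub>m (2*n)"
    using L1 m1 by simp
  have L2: "self_dual (4*n) (row_code (gen_matrix G n g v1 v2 A)) \<longleftrightarrow>
      (X + W = 1\<^sub>m n \<and> Y + Z = 0\<^sub>m n n \<and> Z + Y = 0\<^sub>m n n \<and> W + X = 1\<^sub>m n)"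
    unfolding L1' BB one
    by (rule four_block_eq_iff) (use Xc Yc Zc Wc in auto)
  define P where "P = sigma_mat G n g (gr_add G v1 v2) + A"
  have P: "P = S1 + S2" unfolding P_def S1_def S2_def sadd by (rule assoc_add_mat[OF sc sc Ac])
  have PT: "sigma_mat G n g (gr_star G (gr_add G v1 v2)) + A = transpose_mat S1 + transpose_mat S2"
  proof -
    have tc: "\<And>v. transpose_mat (sigma_mat G n g v) \<in> carrier_mat n n" using sc by simp
    have "sigma_mat G n g (gr_star G (gr_add G v1 v2)) = transpose_mat (sigma_mat G n g v1) + transpose_mat (sigma_mat G n g v2)"
      unfolding sT[symmetric] sadd by (rule transpose_add[OF sc sc])
    moreover have "transpose_mat S2 = transpose_mat (sigma_mat G n g v2) + A"
      unfolding S2_def using transpose_add[OF sc Ac] AT by simp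
    ultimately show ?thesis unfolding S1_def using assoc_add_mat[OF tc tc Ac] by simp
  qed
  have ST1: "sigma_mat G n g (gr_star G v1) = transpose_mat S1" unfolding S1_def sT ..
  have R1: "P * (transpose_mat S1 + transpose_mat S2) = X + Y + Z + W"
    unfolding P X_def Y_def Z_def W_def using S1c S2c T1c T2c
    by (simp add: add_mult_distrib_mat[of _ n n] mult_add_distrib_mat[of _ n n]) (intro eq_matI, auto simp: add_ac)
  have R2: "S1 * (transpose_mat S1 + transpose_mat S2) = X + Y"
    unfolding X_def Y_def using S1c T1c T2c by (simp add: mult_add_distrib_mat[of _ n n])
  have R3: "P * transpose_mat S1 = X + Z"
    unfolding P X_def Z_def using S1c S2c T1c by (simp add: add_mult_distrib_mat[of _ n n])
  have RHS: "((sigma_mat G n g (gr_add G v1 v2) + A) * (sigma_mat G n g (gr_star G (gr_add G v1 v2)) + A) = 1\<^sub>m n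
      \<and> sigma_mat G n g v1 * (sigma_mat G n g (gr_star G (gr_add G v1 v2)) + A)
        = (sigma_mat G n g (gr_add G v1 v2) + A) * sigma_mat G n g (gr_star G v1))
     \<longleftrightarrow> (X + Y + Z + W = 1\<^sub>m n \<and> X + Y = X + Z)"
    unfolding P_def[symmetric] PT ST1 S1_def[symmetric] R1 R2 R3 ..
  define d where "d = (\<lambda>i j. (1\<^sub>m n :: 'a mat) $$ (i,j))"
  have ent: "\<And>M N. M \<in> carrier_mat n n \<Longrightarrow> N \<in> carrier_mat n n \<Longrightarrow>
      (M + N = 1\<^sub>m n) \<longleftrightarrow> (\<forall>i<n. \<forall>j<n. M$$(i,j) + N$$(i,j) = d i j)"
    by (subst mat_eq_iff_entries[of _ n]) (auto simp: d_def)
  have ent0: "\<And>M N. M \<in> carrier_mat n n \<Longrightarrow> N \<in> carrier_mat n n \<Longrightarrow>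
      (M + N = 0\<^sub>m n n) \<longleftrightarrow> (\<forall>i<n. \<forall>j<n. M$$(i,j) + N$$(i,j) = 0)"
    by (subst mat_eq_iff_entries[of _ n]) auto
  have ent4: "X + Y + Z + W = 1\<^sub>m n \<longleftrightarrow> (\<forall>i<n. \<forall>j<n. X$$(i,j) + Y$$(i,j) + Z$$(i,j) + W$$(i,j) = d i j)"
    using Xc Yc Zc Wc by (subst mat_eq_iff_entries[of _ n]) (auto simp: d_def add.assoc)
  have entE: "X + Y = X + Z \<longleftrightarrow> (\<forall>i<n. \<forall>j<n. X$$(i,j) + Y$$(i,j) = X$$(i,j) + Z$$(i,j))"
    using Xc Yc Zc by (subst mat_eq_iff_entries[of _ n]) auto
  have E1: "(X + W = 1\<^sub>m n \<and> Y + Z = 0\<^sub>m n n \<and> Z + Y = 0\<^sub>m n n \<and> W + X = 1\<^sub>m n) \<longleftrightarrow>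
     (\<forall>i<n. \<forall>j<n. X$$(i,j) + W$$(i,j) = d i j \<and> Y$$(i,j) + Z$$(i,j) = 0 \<and> Z$$(i,j) + Y$$(i,j) = 0 \<and> W$$(i,j) + X$$(i,j) = d i j)"
    unfolding ent[OF Xc Wc] ent0[OF Yc Zc] ent0[OF Zc Yc] ent[OF Wc Xc]
    by (simp only: imp_conjR all_conj_distrib)
  have E2: "(X + Y + Z + W = 1\<^sub>m n \<and> X + Y = X + Z) \<longleftrightarrow>
     (\<forall>i<n. \<forall>j<n. X$$(i,j) + Y$$(i,j) + Z$$(i,j) + W$$(i,j) = d i j \<and> X$$(i,j) + Y$$(i,j) = X$$(i,j) + Z$$(i,j))"
    unfolding ent4 entE by (simp only: imp_conjR all_conj_distrib)
  show ?thesis unfolding L2 RHS E1 E2 char2_entries[OF two] ..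
qed

end
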